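(* Let $R$ be a discrete valuation ring with field of fractions $K$ and uniformizer $\pi$, $V$ a finite-dimensional $K$-vector space, and $L,M$ lattices of $V$. Then $\pi\cdot m_+(L,M)\subset m_-(L,M)$.
   Context: A lattice of $V$ is a free $R$-submodule $L$ with $K\otimes_R L\to V$ an isomorphism. $m_-(L,M)=\sum_{n\in\mathbb Z}(\pi^nL\cap\pi^{-n}M)$ (the $R$-submodule generated by these) and $m_+(L,M)=\bigcap_{n\in\mathbb Z}(\pi^nL+\pi^{-n}M)$. *)

theory Defs
  imports Main "HOL.Vector_Spaces"
begin

definition is_subring :: "'k::field set \<Rightarrow> bool" where
  "is_subring R \<longleftrightarrow> 0 \<in> R \<and> 1 \<in> R \<and>
     (\<forall>a\<in>R. \<forall>b\<in>R. a + b \<in> R \<and> a - b \<in> R \<and> a * b \<in> R)"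

definition is_ideal :: "'k::field set \<Rightarrow> 'k set \<Rightarrow> bool" where
  "is_ideal R I \<longleftrightarrow> I \<subseteq> R \<and> 0 \<in> I \<and> (\<forall>a\<in>I. \<forall>b\<in>I. a + b \<in> I)
     \<and> (\<forall>a\<in>I. \<forall>r\<in>R. r * a \<in> I)"

definition principal_ideal :: "'k::field set \<Rightarrow> 'k \<Rightarrow> 'k set" where
  "principal_ideal R a = {r * a | r. r \<in> R}"

definition is_prime_ideal :: "'k::field set \<Rightarrow> 'k set \<Rightarrow> bool" where
  "is_prime_ideal R P \<longleftrightarrow> is_ideal R P \<and> P \<noteq> R \<and>
     (\<forall>a\<in>R. \<forall>b\<in>R. a * b \<in> P \<longrightarrow> a \<in> P \<or> b \<in> P)"

definition is_dvr_with_fraction_field :: "'k::field set \<Rightarrow> bool" where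
  "is_dvr_with_fraction_field R \<longleftrightarrow> is_subring R
     \<and> (\<forall>I. is_ideal R I \<longrightarrow> (\<exists>a\<in>R. I = principal_ideal R a))
     \<and> (\<exists>!P. is_prime_ideal R P \<and> P \<noteq> {0})
     \<and> (\<forall>x. \<exists>a\<in>R. \<exists>b\<in>R. b \<noteq> 0 \<and> x = a / b)"

definition is_uniformizer :: "'k::field set \<Rightarrow> 'k \<Rightarrow> bool" where
  "is_uniformizer R \<pi> \<longleftrightarrow> \<pi> \<in> R \<and> \<pi> \<noteq> 0 \<and> is_prime_ideal R (principal_ideal R \<pi>)"

definition rspan :: "('k \<Rightarrow> 'v \<Rightarrow> 'v) \<Rightarrow> 'k set \<Rightarrow> 'v::ab_group_add set \<Rightarrow> 'v set" where
  "rspan scale R B = {v. \<exists>S u. finite S \<and> S \<subseteq> B \<and> (\<forall>x\<in>S. u x \<in> R)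
       \<and> v = (\<Sum>x\<in>S. scale (u x) x)}"

definition rindep :: "('k::field \<Rightarrow> 'v \<Rightarrow> 'v) \<Rightarrow> 'k set \<Rightarrow> 'v::ab_group_add set \<Rightarrow> bool" where
  "rindep scale R B \<longleftrightarrow> (\<forall>S u. finite S \<and> S \<subseteq> B \<and> (\<forall>x\<in>S. u x \<in> R)
       \<and> (\<Sum>x\<in>S. scale (u x) x) = 0 \<longrightarrow> (\<forall>x\<in>S. u x = 0))"

text \<open>A lattice: a free R-submodule L (with R-basis B) such that K \<otimes>_R L \<rightarrow> V is an
  isomorphism, i.e. the R-basis B of L is a K-basis of V.\<close>
definition is_lattice :: "('k::field \<Rightarrow> 'v \<Rightarrow> 'v) \<Rightarrow> 'k set \<Rightarrow> 'v::ab_group_add set \<Rightarrow> bool" where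
  "is_lattice scale R L \<longleftrightarrow> (\<exists>B. rindep scale R B \<and> rspan scale R B = L
       \<and> rindep scale UNIV B \<and> rspan scale UNIV B = UNIV)"

definition m_minus :: "('k::field \<Rightarrow> 'v \<Rightarrow> 'v) \<Rightarrow> 'k set \<Rightarrow> 'k \<Rightarrow> 'v::ab_group_add set \<Rightarrow> 'v set \<Rightarrow> 'v set" where
  "m_minus scale R \<pi> L M = rspan scale R
     (\<Union>n::int. (scale (\<pi> powi n) ` L) \<inter> (scale (\<pi> powi (- n)) ` M))"

definition m_plus :: "('k::field \<Rightarrow> 'v \<Rightarrow> 'v) \<Rightarrow> 'k set \<Rightarrow> 'k \<Rightarrow> 'v::ab_group_add set \<Rightarrow> 'v set \<Rightarrow> 'v set" where
  "m_plus scale R \<pi> L M = (\<Inter>n::int.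
     {a + b | a b. a \<in> scale (\<pi> powi n) ` L \<and> b \<in> scale (\<pi> powi (- n)) ` M})"

end

theory Submission
  imports Defs
begin


lemma principal_is_ideal:
  assumes "is_subring R" "a \<in> R"
  shows "is_ideal R (principal_ideal R a)"
  using assms unfolding is_ideal_def principal_ideal_def is_subring_def
  by (auto simp: distrib_right[symmetric] mult.assoc[symmetric])

lemma dvr_pow_div:
  assumes dvr: "is_dvr_with_fraction_field R" and un: "is_uniformizer R \<pi>"
    and b: "b \<in> R" "b \<noteq> 0"
  shows "\<exists>k r. r \<in> R \<and> \<pi> ^ k = r * b"
proof (rule ccontr)
  assume nex: "\<not> ?thesis"
  have sr: "is_subring R" using dvr unfolding is_dvr_with_fraction_field_def by blast
  have piR: "\<pi> \<in> R" "\<pi> \<noteq> 0" using un unfolding is_uniformizer_def by auto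
  define A where "A = {I. is_ideal R I \<and> b \<in> I \<and> (\<forall>k. \<pi> ^ k \<notin> I)}"
  have bA: "principal_ideal R b \<in> A"
    unfolding A_def using principal_is_ideal[OF sr b(1)] nex sr
    unfolding principal_ideal_def is_subring_def by force
  have "\<forall>C\<in>chains A. \<exists>U\<in>A. \<forall>X\<in>C. X \<subseteq> U"
  proof
    fix C assume C: "C \<in> chains A"
    show "\<exists>U\<in>A. \<forall>X\<in>C. X \<subseteq> U"
    proof (cases "C = {}")
      case True then show ?thesis using bA by blast
    next
      case False
      have CA: "C \<subseteq> A" and ch: "\<forall>X\<in>C. \<forall>Y\<in>C. X \<subseteq> Y \<or> Y \<subseteq> X"
        using C unfolding chains_def chain_subset_def by auto
      have "\<Union>C \<in> A"
        unfolding A_def is_ideal_def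
      proof (intro CollectI conjI ballI allI)
        show "\<Union>C \<subseteq> R" using CA unfolding A_def is_ideal_def by blast
        show "0 \<in> \<Union>C" using CA False unfolding A_def is_ideal_def by blast
        show "b \<in> \<Union>C" using CA False unfolding A_def by blast
        fix k show "\<pi> ^ k \<notin> \<Union>C" using CA unfolding A_def by blast
      next
        fix x y assume "x \<in> \<Union>C" "y \<in> \<Union>C"
        then obtain X Y where "X \<in> C" "Y \<in> C" "x \<in> X" "y \<in> Y" by blast
        moreover have "\<forall>I\<in>C. \<forall>x\<in>I. \<forall>y\<in>I. x + y \<in> I" using CA unfolding A_def is_ideal_def by blast
        ultimately show "x + y \<in> \<Union>C" using ch
          by (metis UnionI subsetD)
      next
        fix x r assume "x \<in> \<Union>C" "r \<in> R"
        then show "r * x \<in> \<Union>C" using CA unfolding A_def is_ideal_def by blast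
      qed
      then show ?thesis by blast
    qed
  qed
  from Zorn_Lemma2[OF this] obtain P where PA: "P \<in> A" and Pmax: "\<forall>X\<in>A. P \<subseteq> X \<longrightarrow> X = P"
    by blast
  have Pid: "is_ideal R P" and bP: "b \<in> P" and Pnp: "\<And>k. \<pi> ^ k \<notin> P" using PA unfolding A_def by auto
  have PR: "P \<subseteq> R" using Pid unfolding is_ideal_def by blast
  have ext: "\<exists>k p r. p \<in> P \<and> r \<in> R \<and> \<pi> ^ k = p + r * x" if x: "x \<in> R" "x \<notin> P" for x
  proof -
    define Q where "Q = {p + r * x | p r. p \<in> P \<and> r \<in> R}"
    have "is_ideal R Q" unfolding is_ideal_def
    proof (intro conjI ballI)
      show "Q \<subseteq> R" using PR x sr unfolding Q_def is_subring_def by blast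
      show "0 \<in> Q" unfolding Q_def using Pid sr unfolding is_ideal_def is_subring_def
        by (metis (mono_tags, lifting) add.right_neutral mem_Collect_eq mult_zero_left)
    next
      fix a c assume "a \<in> Q" "c \<in> Q"
      then obtain p1 r1 p2 r2 where "a = p1 + r1 * x" "c = p2 + r2 * x" "p1 \<in> P" "p2 \<in> P" "r1 \<in> R" "r2 \<in> R"
        unfolding Q_def by blast
      moreover have "a + c = (p1 + p2) + (r1 + r2) * x" using calculation by (simp add: algebra_simps)
      moreover have "p1 + p2 \<in> P" "r1 + r2 \<in> R" using calculation Pid sr unfolding is_ideal_def is_subring_def by auto
      ultimately show "a + c \<in> Q" unfolding Q_def by blast
    next
      fix a t assume "a \<in> Q" "t \<in> R"
      then obtain p1 r1 where "a = p1 + r1 * x" "p1 \<in> P" "r1 \<in> R"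
        unfolding Q_def by blast
      moreover have "t * a = (t * p1) + (t * r1) * x" using calculation by (simp add: algebra_simps)
      moreover have "t * p1 \<in> P" "t * r1 \<in> R" using calculation Pid sr \<open>t \<in> R\<close> unfolding is_ideal_def is_subring_def by auto
      ultimately show "t * a \<in> Q" unfolding Q_def by blast
    qed
    moreover have "P \<subseteq> Q"
    proof
      fix p assume "p \<in> P"
      moreover have "p = p + 0 * x" by simp
      ultimately show "p \<in> Q" unfolding Q_def using sr unfolding is_subring_def by blast
    qed
    moreover have "x = 0 + 1 * x" by simp
    then have "x \<in> Q" unfolding Q_def using sr Pid unfolding is_subring_def is_ideal_def by blast
    ultimately have "Q \<notin> A" using Pmax x by blast
    with \<open>is_ideal R Q\<close> \<open>P \<subseteq> Q\<close> bP obtain k where "\<pi> ^ k \<in> Q" unfolding A_def by blast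
    then show ?thesis unfolding Q_def by blast
  qed
  have Pprime: "is_prime_ideal R P" unfolding is_prime_ideal_def
  proof (intro conjI ballI impI)
    show "is_ideal R P" by fact
    show "P \<noteq> R" using Pnp[of 0] sr unfolding is_subring_def by auto
  next
    fix x y assume xy: "x \<in> R" "y \<in> R" "x * y \<in> P"
    show "x \<in> P \<or> y \<in> P"
    proof (rule ccontr)
      assume "\<not> ?thesis"
      then obtain i p1 r1 j p2 r2 where 1: "p1 \<in> P" "r1 \<in> R" "\<pi> ^ i = p1 + r1 * x"
        and 2: "p2 \<in> P" "r2 \<in> R" "\<pi> ^ j = p2 + r2 * y"
        using ext xy by meson
      have "\<pi> ^ (i + j) = p2 * p1 + (r2 * y) * p1 + (r1 * x) * p2 + (r1 * r2) * (x * y)"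
        by (simp add: power_add 1 2 algebra_simps)
      also have "\<dots> \<in> P"
        using Pid 1 2 xy PR sr unfolding is_ideal_def is_subring_def by (meson subsetD)
      finally show False using Pnp by blast
    qed
  qed
  have "P \<noteq> {0}" using bP b by auto
  moreover have ppi: "\<pi> \<in> principal_ideal R \<pi>"
  proof -
    have "\<pi> = 1 * \<pi>" by simp
    then show ?thesis using sr unfolding principal_ideal_def is_subring_def by blast
  qed
  moreover have pp: "is_prime_ideal R (principal_ideal R \<pi>)" "principal_ideal R \<pi> \<noteq> {0}"
    using un unfolding is_uniformizer_def apply blast
    using piR ppi by auto
  ultimately have "P = principal_ideal R \<pi>"
    using dvr Pprime unfolding is_dvr_with_fraction_field_def by blast
  with ppi show False using Pnp[of 1] by simp
qed

lemma dvr_clear: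
  assumes dvr: "is_dvr_with_fraction_field R" and un: "is_uniformizer R \<pi>"
  shows "\<exists>k. \<pi> ^ k * x \<in> R"
proof -
  have sr: "is_subring R" using dvr unfolding is_dvr_with_fraction_field_def by blast
  obtain a b where ab: "a \<in> R" "b \<in> R" "b \<noteq> 0" "x = a / b"
    using dvr unfolding is_dvr_with_fraction_field_def by blast
  obtain k r where "r \<in> R" "\<pi> ^ k = r * b" using dvr_pow_div[OF dvr un ab(2,3)] by blast
  then have "\<pi> ^ k * x = r * a" using ab by (simp add: field_simps)
  then show ?thesis using \<open>r \<in> R\<close> ab sr unfolding is_subring_def by metis
qed



lemma subring_pow: "is_subring R \<Longrightarrow> x \<in> R \<Longrightarrow> x ^ n \<in> R"
  by (induction n) (auto simp: is_subring_def)

context vector_space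
begin

lemma rspanI:
  assumes "finite S" "S \<subseteq> B" "\<forall>x\<in>S. u x \<in> R" "v = (\<Sum>x\<in>S. u x *s x)"
  shows "v \<in> rspan scale R B"
  unfolding rspan_def mem_Collect_eq
  by (rule exI[of _ S], rule exI[of _ u]) (simp add: assms)

lemma rspan_zero: "0 \<in> rspan scale R B"
  unfolding rspan_def by (auto intro!: exI[of _ "{}"])

lemma rspan_base: "1 \<in> R \<Longrightarrow> x \<in> B \<Longrightarrow> x \<in> rspan scale R B"
  unfolding rspan_def by (auto intro!: exI[of _ "{x}"] exI[of _ "\<lambda>_. 1"])

lemma rspan_add:
  assumes sr: "is_subring R" and x: "x \<in> rspan scale R B" and y: "y \<in> rspan scale R B"
  shows "x + y \<in> rspan scale R B"
proof -
  obtain S1 u1 where 1: "finite S1" "S1 \<subseteq> B" "\<forall>v\<in>S1. u1 v \<in> R" "x = (\<Sum>v\<in>S1. u1 v *s v)"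
    using x unfolding rspan_def by blast
  obtain S2 u2 where 2: "finite S2" "S2 \<subseteq> B" "\<forall>v\<in>S2. u2 v \<in> R" "y = (\<Sum>v\<in>S2. u2 v *s v)"
    using y unfolding rspan_def by blast
  define f where "f v = (if v \<in> S1 then u1 v else 0)" for v
  define g where "g v = (if v \<in> S2 then u2 v else 0)" for v
  have e1: "(\<Sum>v\<in>S1 \<union> S2. f v *s v) = x"
    unfolding 1(4) f_def by (rule sum.mono_neutral_cong_right) (use 1 2 in auto)
  have e2: "(\<Sum>v\<in>S1 \<union> S2. g v *s v) = y"
    unfolding 2(4) g_def by (rule sum.mono_neutral_cong_right) (use 1 2 in auto)
  have "x + y = (\<Sum>v\<in>S1 \<union> S2. (f v + g v) *s v)"
    by (simp add: scale_left_distrib sum.distrib e1 e2)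
  moreover have "\<forall>v\<in>S1 \<union> S2. f v + g v \<in> R"
  proof
    fix v
    have R0: "0 \<in> R" and Radd: "\<And>a b. a \<in> R \<Longrightarrow> b \<in> R \<Longrightarrow> a + b \<in> R"
      using sr unfolding is_subring_def by auto
    have "f v \<in> R" unfolding f_def using 1(3) R0 by auto
    moreover have "g v \<in> R" unfolding g_def using 2(3) R0 by auto
    ultimately show "f v + g v \<in> R" by (rule Radd)
  qed
  moreover have "finite (S1 \<union> S2)" "S1 \<union> S2 \<subseteq> B" using 1 2 by auto
  ultimately show ?thesis by (intro rspanI[where S = "S1 \<union> S2" and u = "\<lambda>v. f v + g v"]) auto
qed

lemma rspan_scale:
  assumes sr: "is_subring R" and r: "r \<in> R" and x: "x \<in> rspan scale R B"
  shows "r *s x \<in> rspan scale R B"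
proof -
  obtain S u where 1: "finite S" "S \<subseteq> B" "\<forall>v\<in>S. u v \<in> R" "x = (\<Sum>v\<in>S. u v *s v)"
    using x unfolding rspan_def by blast
  have "r *s x = (\<Sum>v\<in>S. (r * u v) *s v)" by (simp add: 1(4) scale_sum_right)
  moreover have "\<forall>v\<in>S. r * u v \<in> R" using 1 r sr unfolding is_subring_def by auto
  ultimately show ?thesis using 1 by (intro rspanI[where S = S and u = "\<lambda>v. r * u v"]) auto
qed

lemma rspan_diff:
  assumes sr: "is_subring R" and x: "x \<in> rspan scale R B" and y: "y \<in> rspan scale R B"
  shows "x - y \<in> rspan scale R B"
proof -
  have "0 - 1 \<in> R" using sr unfolding is_subring_def by blast
  then have "- 1 \<in> R" by simp
  from rspan_scale[OF sr this y] have "- y \<in> rspan scale R B" by simp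
  from rspan_add[OF sr x this] show ?thesis by simp
qed

lemma rspan_sum:
  assumes sr: "is_subring R" and "finite F" and "\<forall>i\<in>F. f i \<in> rspan scale R B"
  shows "sum f F \<in> rspan scale R B"
  using assms(2,3)
proof (induction F rule: finite_induct)
  case empty then show ?case by (simp add: rspan_zero)
next
  case (insert i F)
  then show ?case by (simp add: rspan_add[OF sr])
qed

lemma clear_denominators:
  assumes dvr: "is_dvr_with_fraction_field R" and un: "is_uniformizer R \<pi>"
    and sp: "rspan scale UNIV B = UNIV"
  shows "\<exists>k. \<pi> ^ k *s v \<in> rspan scale R B"
proof -
  have sr: "is_subring R" using dvr unfolding is_dvr_with_fraction_field_def by blast
  have piR: "\<pi> \<in> R" using un unfolding is_uniformizer_def by auto
  have "v \<in> rspan scale UNIV B" using sp by simp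
  then obtain S u where 1: "finite S" "S \<subseteq> B" "v = (\<Sum>x\<in>S. u x *s x)"
    unfolding rspan_def by blast
  have "\<forall>x. \<exists>k. \<pi> ^ k * u x \<in> R" using dvr_clear[OF dvr un] by blast
  then obtain kk where kk0: "\<forall>x. \<pi> ^ kk x * u x \<in> R" by (rule choice[THEN exE])
  note kk = kk0[rule_format]
  define k where "k = (\<Sum>x\<in>S. kk x)"
  have kR: "\<pi> ^ k * u x \<in> R" if "x \<in> S" for x
  proof -
    have "kk x \<le> k" unfolding k_def by (intro member_le_sum) (use 1(1) that in auto)
    then have eq: "\<pi> ^ k * u x = \<pi> ^ (k - kk x) * (\<pi> ^ kk x * u x)"
      by (simp add: power_add[symmetric])
    have mem: "\<pi> ^ (k - kk x) * (\<pi> ^ kk x * u x) \<in> R"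
      using kk[of x] subring_pow[OF sr piR, of "k - kk x"] sr unfolding is_subring_def by blast
    show ?thesis unfolding eq by (rule mem)
  qed
  have "\<pi> ^ k *s v = (\<Sum>x\<in>S. (\<pi> ^ k * u x) *s x)" by (simp add: 1(3) scale_sum_right)
  then have "\<pi> ^ k *s v \<in> rspan scale R B" using 1 kR by (intro rspanI[where S = S and u = "\<lambda>x. \<pi> ^ k * u x"]) auto
  then show ?thesis by blast
qed

lemma lattice_bound:
  assumes fd: "finite_dimensional_vector_space scale Bf"
    and dvr: "is_dvr_with_fraction_field R" and un: "is_uniformizer R \<pi>"
    and L: "is_lattice scale R L" and M: "is_lattice scale R M"
  shows "\<exists>k. \<forall>l\<in>L. \<pi> ^ k *s l \<in> M"
proof -
  have sr: "is_subring R" using dvr unfolding is_dvr_with_fraction_field_def by blast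
  have piR: "\<pi> \<in> R" using un unfolding is_uniformizer_def by auto
  obtain BL where BL: "rindep scale R BL" "rspan scale R BL = L" "rindep scale UNIV BL"
    using L unfolding is_lattice_def by blast
  obtain BM where BM: "rspan scale R BM = M" "rspan scale UNIV BM = UNIV"
    using M unfolding is_lattice_def by blast
  have "independent BL" unfolding independent_explicit_finite_subsets
  proof (intro allI impI ballI)
    fix S u v assume "S \<subseteq> BL" "finite S" "(\<Sum>v\<in>S. u v *s v) = 0" "v \<in> S"
    then show "u v = 0" using BL(3) unfolding rindep_def by blast
  qed
  then have fin: "finite BL" using finite_dimensional_vector_space.finiteI_independent[OF fd] by blast
  have "\<forall>x. \<exists>k. \<pi> ^ k *s x \<in> M" using clear_denominators[OF dvr un BM(2)] BM(1) by blast
  then obtain kk where kk0: "\<forall>x. \<pi> ^ kk x *s x \<in> M" by (rule choice[THEN exE])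
  note kk = kk0[rule_format]
  define k where "k = (\<Sum>x\<in>BL. kk x)"
  have kx: "\<pi> ^ k *s x \<in> M" if "x \<in> BL" for x
  proof -
    have "kk x \<le> k" unfolding k_def by (intro member_le_sum) (use fin that in auto)
    then have eq: "\<pi> ^ k *s x = \<pi> ^ (k - kk x) *s (\<pi> ^ kk x *s x)"
      by (simp add: power_add[symmetric])
    have mem: "\<pi> ^ (k - kk x) *s (\<pi> ^ kk x *s x) \<in> M"
      using rspan_scale[OF sr subring_pow[OF sr piR], of "\<pi> ^ kk x *s x" BM "k - kk x"] kk[of x] BM(1) by simp
    show ?thesis unfolding eq by (rule mem)
  qed
  have "\<pi> ^ k *s l \<in> M" if "l \<in> L" for l
  proof -
    have "l \<in> rspan scale R BL" using that BL(2) by simp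
    then obtain S u where 1: "finite S" "S \<subseteq> BL" "\<forall>x\<in>S. u x \<in> R" "l = (\<Sum>x\<in>S. u x *s x)"
      unfolding rspan_def by blast
    have "\<pi> ^ k *s l = (\<Sum>x\<in>S. u x *s (\<pi> ^ k *s x))" by (simp add: 1(4) scale_sum_right mult.commute)
    also have "\<dots> \<in> M" unfolding BM(1)[symmetric]
    proof (rule rspan_sum[OF sr 1(1)], rule ballI)
      fix x assume "x \<in> S"
      then show "u x *s (\<pi> ^ k *s x) \<in> rspan scale R BM"
        using rspan_scale[OF sr, of "u x" "\<pi> ^ k *s x" BM] 1 kx BM(1) by blast
    qed
    finally show ?thesis .
  qed
  then show ?thesis by blast
qed

end


context vector_space begin
lemma main_aux:
  fixes R :: "'a set" and \<pi> :: 'a and L M :: "'b set"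
  assumes "\<exists>B. finite_dimensional_vector_space scale B"
    and "is_dvr_with_fraction_field R"
    and "is_uniformizer R \<pi>"
    and "is_lattice scale R L"
    and "is_lattice scale R M"
  shows "scale \<pi> ` m_plus scale R \<pi> L M \<subseteq> m_minus scale R \<pi> L M"
proof -
  note dvr = assms(2) and un = assms(3)
  obtain Bf where fd: "finite_dimensional_vector_space scale Bf" using assms(1) by blast
  have sr: "is_subring R" using dvr unfolding is_dvr_with_fraction_field_def by blast
  have piR: "\<pi> \<in> R" and pi0: "\<pi> \<noteq> 0" using un unfolding is_uniformizer_def by auto
  have R1: "1 \<in> R" using sr unfolding is_subring_def by blast
  obtain BL where BL: "rspan scale R BL = L" by (meson assms(4) is_lattice_def)
  obtain BM where BM: "rspan scale R BM = M" by (meson assms(5) is_lattice_def)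
  have Lsc: "r *s l \<in> L" if "r \<in> R" "l \<in> L" for r l using rspan_scale[OF sr that(1)] that(2) BL by blast
  have Msc: "r *s l \<in> M" if "r \<in> R" "l \<in> M" for r l using rspan_scale[OF sr that(1)] that(2) BM by blast
  have Ldf: "a - b \<in> L" if "a \<in> L" "b \<in> L" for a b using rspan_diff[OF sr] that BL by blast
  have Mdf: "a - b \<in> M" if "a \<in> M" "b \<in> M" for a b using rspan_diff[OF sr] that BM by blast
  obtain k1 where k1: "\<forall>l\<in>L. \<pi> ^ k1 *s l \<in> M" using lattice_bound[OF fd dvr un assms(4,5)] by blast
  obtain k2 where k2: "\<forall>l\<in>M. \<pi> ^ k2 *s l \<in> L" using lattice_bound[OF fd dvr un assms(5,4)] by blast
  define K where "K = k1 + k2"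
  have kL: "\<pi> ^ K *s l \<in> M" if "l \<in> L" for l
  proof -
    have "\<pi> ^ K *s l = \<pi> ^ k2 *s (\<pi> ^ k1 *s l)" by (simp add: K_def power_add mult.commute)
    then show ?thesis using Msc[OF subring_pow[OF sr piR]] k1 that by metis
  qed
  have kM: "\<pi> ^ K *s l \<in> L" if "l \<in> M" for l
  proof -
    have "\<pi> ^ K *s l = \<pi> ^ k1 *s (\<pi> ^ k2 *s l)" by (simp add: K_def power_add)
    then show ?thesis using Lsc[OF subring_pow[OF sr piR]] k2 that by metis
  qed
  define U where "U = (\<Union>n::int. (scale (\<pi> powi n) ` L) \<inter> (scale (\<pi> powi (- n)) ` M))"
  have mm: "m_minus scale R \<pi> L M = rspan scale R U" unfolding m_minus_def U_def by simp
  have inU: "u \<in> rspan scale R U" if "u \<in> scale (\<pi> powi n) ` L" "u \<in> scale (\<pi> powi (- n)) ` M" for u n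
    using rspan_base[OF R1, of u U] that unfolding U_def by blast
  show ?thesis
  proof
    fix y assume "y \<in> scale \<pi> ` m_plus scale R \<pi> L M"
    then obtain x where y: "y = \<pi> *s x" and x: "x \<in> m_plus scale R \<pi> L M" by blast
    have "\<forall>n. \<exists>l m. l \<in> L \<and> m \<in> M \<and> x = (\<pi> powi n) *s l + (\<pi> powi (- n)) *s m"
      using x unfolding m_plus_def by blast
    then obtain la where "\<forall>n. \<exists>m. la n \<in> L \<and> m \<in> M \<and> x = (\<pi> powi n) *s la n + (\<pi> powi (- n)) *s m"
      by (rule choice[THEN exE])
    then obtain mb where "\<forall>n. la n \<in> L \<and> mb n \<in> M \<and> x = (\<pi> powi n) *s la n + (\<pi> powi (- n)) *s mb n"
      by (rule choice[THEN exE])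
    then obtain la mb where lm: "\<And>n. la n \<in> L" "\<And>n. mb n \<in> M"
      and xe: "\<And>n. x = (\<pi> powi n) *s la n + (\<pi> powi (- n)) *s mb n" by blast
    define a where "a n = (\<pi> powi n) *s la n" for n
    define b where "b n = (\<pi> powi (- n)) *s mb n" for n
    have xab: "x = a n + b n" for n unfolding a_def b_def by (rule xe)
    have d: "\<pi> *s a n - \<pi> *s a (n + 1) \<in> rspan scale R U" for n
    proof (rule inU)
      have p1: "\<pi> powi (n + 1) = \<pi> powi n * \<pi>" using pi0 by (simp add: power_int_add_1)
      have "\<pi> *s a n - \<pi> *s a (n + 1) = (\<pi> powi n) *s (\<pi> *s la n - \<pi> *s (\<pi> *s la (n + 1)))"
        unfolding a_def p1 by (simp add: scale_right_diff_distrib mult.commute mult.left_commute)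
      moreover have "\<pi> *s la n - \<pi> *s (\<pi> *s la (n + 1)) \<in> L"
        using Ldf Lsc piR lm by blast
      ultimately show "\<pi> *s a n - \<pi> *s a (n + 1) \<in> scale (\<pi> powi n) ` L" by blast
      have p2: "\<pi> powi (- n) = \<pi> powi (- (n + 1)) * \<pi>"
        using pi0 power_int_add_1[of \<pi> "- (n+1)"] by simp
      have "a n - a (n + 1) = b (n + 1) - b n" using xab[of n] xab[of "n+1"] by (simp add: algebra_simps)
      then have "\<pi> *s a n - \<pi> *s a (n + 1) = \<pi> *s (b (n + 1) - b n)"
        by (simp add: scale_right_diff_distrib[symmetric])
      also have "\<dots> = (\<pi> powi (- n)) *s (mb (n + 1) - \<pi> *s mb n)"
        unfolding b_def p2 by (simp add: scale_right_diff_distrib mult.commute mult.left_commute)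
      finally have "\<pi> *s a n - \<pi> *s a (n + 1) = (\<pi> powi (- n)) *s (mb (n + 1) - \<pi> *s mb n)" .
      moreover have "mb (n + 1) - \<pi> *s mb n \<in> M"
        using Mdf Msc piR lm by blast
      ultimately show "\<pi> *s a n - \<pi> *s a (n + 1) \<in> scale (\<pi> powi (- n)) ` M" by blast
    qed
    have tel: "\<pi> *s a (- int K) - \<pi> *s a (- int K + int j) \<in> rspan scale R U" for j
    proof (induction j)
      case 0 then show ?case using rspan_zero by simp
    next
      case (Suc j)
      have e: "- int K + int (Suc j) = (- int K + int j) + 1" by simp
      have "\<pi> *s a (- int K) - \<pi> *s a (- int K + int (Suc j)) =
        (\<pi> *s a (- int K) - \<pi> *s a (- int K + int j)) + (\<pi> *s a (- int K + int j) - \<pi> *s a ((- int K + int j) + 1))"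
        unfolding e by simp
      also have "\<dots> \<in> rspan scale R U" by (rule rspan_add[OF sr Suc d])
      finally show ?case .
    qed
    have cK: "inverse (\<pi> ^ K) * (\<pi> ^ (K + 1) * \<pi> ^ K) = \<pi> * \<pi> ^ K" using pi0 by (simp add: field_simps)
    have T1: "\<pi> *s a (int K) \<in> rspan scale R U"
    proof (rule inU)
      have e: "\<pi> *s a (int K) = \<pi> ^ K *s (\<pi> *s la (int K))" unfolding a_def by (simp add: mult.commute)
      show "\<pi> *s a (int K) \<in> scale (\<pi> powi (int K)) ` L" unfolding e power_int_of_nat by (rule imageI) (rule Lsc[OF piR lm(1)])
      have eq2: "\<pi> *s a (int K) = inverse (\<pi> ^ K) *s (\<pi> ^ (K + 1) *s (\<pi> ^ K *s la (int K)))"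
        unfolding a_def using cK by (simp only: scale_scale power_int_of_nat minus_minus)
      have mem2: "\<pi> ^ (K + 1) *s (\<pi> ^ K *s la (int K)) \<in> M"
        using Msc[OF subring_pow[OF sr piR]] kL lm by blast
      show "\<pi> *s a (int K) \<in> scale (\<pi> powi (- int K)) ` M"
        unfolding eq2 power_int_minus power_int_of_nat by (rule imageI[OF mem2])
    qed
    have T2: "\<pi> *s b (- int K) \<in> rspan scale R U"
    proof (rule inU)
      have e: "\<pi> *s b (- int K) = \<pi> ^ K *s (\<pi> *s mb (- int K))" unfolding b_def by (simp add: mult.commute)
      show "\<pi> *s b (- int K) \<in> scale (\<pi> powi (- (- int K))) ` M" unfolding e minus_minus power_int_of_nat by (rule imageI) (rule Msc[OF piR lm(2)])
      have eq2: "\<pi> *s b (- int K) = inverse (\<pi> ^ K) *s (\<pi> ^ (K + 1) *s (\<pi> ^ K *s mb (- int K)))"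
        unfolding b_def using cK by (simp only: scale_scale power_int_of_nat minus_minus)
      have mem2: "\<pi> ^ (K + 1) *s (\<pi> ^ K *s mb (- int K)) \<in> L"
        using Lsc[OF subring_pow[OF sr piR]] kM lm by blast
      show "\<pi> *s b (- int K) \<in> scale (\<pi> powi (- int K)) ` L"
        unfolding eq2 power_int_minus power_int_of_nat by (rule imageI[OF mem2])
    qed
    have "y = (\<pi> *s a (- int K) - \<pi> *s a (- int K + int (2 * K))) + \<pi> *s a (int K) + \<pi> *s b (- int K)"
      unfolding y xab[of "- int K"] by (simp add: scale_right_distrib)
    moreover have "(\<pi> *s a (- int K) - \<pi> *s a (- int K + int (2 * K))) + \<pi> *s a (int K) \<in> rspan scale R U"
      by (rule rspan_add[OF sr tel T1])
    ultimately show "y \<in> m_minus scale R \<pi> L M"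
      unfolding mm using rspan_add[OF sr _ T2] by simp
  qed
qed
end

theorem theorem1p2p4:
  fixes scale :: "'k::field \<Rightarrow> 'v::ab_group_add \<Rightarrow> 'v"
    and R :: "'k set" and \<pi> :: 'k and L M :: "'v set"
  assumes "vector_space scale"
    and "\<exists>B. finite_dimensional_vector_space scale B"
    and "is_dvr_with_fraction_field R"
    and "is_uniformizer R \<pi>"
    and "is_lattice scale R L"
    and "is_lattice scale R M"
  shows "scale \<pi> ` m_plus scale R \<pi> L M \<subseteq> m_minus scale R \<pi> L M"
  using vector_space.main_aux[OF assms] .

end
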